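(* Let $u$ be a partition with $\omega(u)=n\ge1$ and $d=d(u)$. Define $\Gamma$ by $n+d-2=2(u_1+2u_3+e)+\Gamma$. Then: (i) $\Gamma=-2$ if $\dot n=0$; (ii) $\Gamma=0$ if $\dot n=7\cdot 2^\alpha$ and $u_7=2^\alpha$ for some integer $\alpha\ge0$; (iii) $\Gamma=1$ if $\dot n=2$; (iv) $\Gamma\ge 2$ otherwise.
   Context: A partition is a sequence $u=(u_1,u_2,\dots)$ of nonnegative integers, almost all zero ($u_i$ = number of parts equal to $i$); weight $\omega(u)=\sum_i iu_i$, degree $d(u)=\sum_i u_i$; $\gamma_u=\prod_{i\ge1}(i+1)^{u_i}u_i!$. With $v=v_2$ the $2$-adic valuation, put $e=v(\gamma_u)-v((2u_1)!)-(2u_3+v(u_3!))$ and $\dot n=n-u_1-3u_3$ (equivalently, $\dot n$ is the weight and $e=v(\gamma_{\dot u})$ of the partition $\dot u$ obtained from $u$ by setting $\dot u_1=\dot u_3=0$ and $\dot u_i=u_i$ for $i\ne1,3$). *)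

theory Defs
  imports "HOL-Computational_Algebra.Computational_Algebra"
begin

text \<open>A partition is a function u :: nat => nat with finite support; u i is the number
  of parts equal to i (i >= 1). The value u 0 is ignored.\<close>

definition is_partition :: "(nat \<Rightarrow> nat) \<Rightarrow> bool" where
  "is_partition u \<longleftrightarrow> finite {i. u i \<noteq> 0}"

definition psupp :: "(nat \<Rightarrow> nat) \<Rightarrow> nat set" where
  "psupp u = {i. 0 < i \<and> u i \<noteq> 0}"

definition pweight :: "(nat \<Rightarrow> nat) \<Rightarrow> nat" where
  "pweight u = (\<Sum>i\<in>psupp u. i * u i)"

definition pdegree :: "(nat \<Rightarrow> nat) \<Rightarrow> nat" where
  "pdegree u = (\<Sum>i\<in>psupp u. u i)"

definition pgamma :: "(nat \<Rightarrow> nat) \<Rightarrow> nat" where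
  "pgamma u = (\<Prod>i\<in>psupp u. (i + 1) ^ (u i) * fact (u i))"

definition v2 :: "nat \<Rightarrow> nat" where
  "v2 m = multiplicity (2::nat) m"

definition pe :: "(nat \<Rightarrow> nat) \<Rightarrow> int" where
  "pe u = int (v2 (pgamma u)) - int (v2 (fact (2 * u 1)))
          - (2 * int (u 3) + int (v2 (fact (u 3))))"

definition ndot :: "(nat \<Rightarrow> nat) \<Rightarrow> nat" where
  "ndot u = pweight u - u 1 - 3 * u 3"

definition pGamma :: "(nat \<Rightarrow> nat) \<Rightarrow> int" where
  "pGamma u = int (pweight u) + int (pdegree u) - 2
              - 2 * (int (u 1) + 2 * int (u 3) + pe u)"

end

theory Submission imports Defs begin

lemma v2_mult: "a \<noteq> 0 \<Longrightarrow> b \<noteq> 0 \<Longrightarrow> v2 (a*b) = v2 a + v2 b"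
  unfolding v2_def by (rule prime_elem_multiplicity_mult_distrib) auto

lemma v2_pow: "a \<noteq> 0 \<Longrightarrow> v2 (a^n) = n * v2 a"
  unfolding v2_def by (rule prime_elem_multiplicity_power_distrib) auto

lemma v2_odd: "odd a \<Longrightarrow> v2 a = 0"
  unfolding v2_def by (rule not_dvd_imp_multiplicity_0) auto

lemma v2_double: "a \<noteq> 0 \<Longrightarrow> v2 (2*a) = Suc (v2 a)"
  unfolding v2_def by (rule multiplicity_times_same) auto

lemma v2_2pow: "v2 (2^n) = n"
  unfolding v2_def by simp

lemma v2_dvd: "a \<noteq> 0 \<Longrightarrow> 2 ^ v2 a dvd a"
  unfolding v2_def by (rule multiplicity_dvd)

lemma v2_fact_double: "v2 (fact (2*m)) = m + v2 (fact m)"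
proof (induction m)
  case 0 then show ?case by (simp add: v2_def)
next
  case (Suc m)
  have e: "fact (2 * Suc m) = (fact (2*m) * (2*m+1)) * (2*(m+1)::nat)"
    by (simp add: algebra_simps)
  have "v2 (fact (2 * Suc m)::nat) = v2 (fact (2*m)) + v2 (2*m+1) + v2 (2*(m+1))"
    unfolding e using v2_mult[of "fact (2*m) * (2*m+1)" "2*(m+1)"] v2_mult[of "fact (2*m)" "2*m+1"]
    by (simp add: fact_nonzero del: mult_Suc mult_Suc_right add_Suc_right)
  also have "\<dots> = v2 (fact (2*m)) + 1 + v2 (m+1)"
    using v2_double[of "m+1"] v2_odd[of "2*m+1"] by (simp del: mult_Suc mult_Suc_right add_Suc_right)
  also have "v2 (fact (Suc m)::nat) = v2 (fact m) + v2 (m+1)"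
    using v2_mult[of "fact m" "Suc m"] by (simp add: fact_nonzero mult.commute)
  ultimately show ?case using Suc by simp
qed

lemma v2_fact_odd: "v2 (fact (2*m+1)) = v2 (fact (2*m)::nat)"
proof -
  have "v2 (fact (2*m+1)::nat) = v2 (fact (2*m) * (2*m+1))" by (simp add: algebra_simps)
  also have "\<dots> = v2 (fact (2*m)) + v2 (2*m+1)" using v2_mult[of "fact (2*m)" "2*m+1"] by (simp add: fact_nonzero)
  finally show ?thesis by (simp add: v2_odd)
qed

lemma v2_fact_bound: "m \<ge> 1 \<Longrightarrow> v2 (fact m::nat) + 1 \<le> m \<and> ((\<nexists>a. m = 2^a) \<longrightarrow> v2 (fact m::nat) + 2 \<le> m)"
proof (induction m rule: less_induct)
  case (less m)
  obtain k where k: "m = 2*k \<or> m = 2*k+1" by (metis oddE evenE)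
  show ?case
  proof (cases "m = 2*k")
    case True
    then have "k \<ge> 1" "k < m" using less by auto
    from less.IH[OF this(2) this(1)] have ih: "v2 (fact k::nat) + 1 \<le> k"
      "(\<nexists>a. k = 2^a) \<longrightarrow> v2 (fact k::nat) + 2 \<le> k" by auto
    have p: "(\<nexists>a. m = 2^a) \<longrightarrow> (\<nexists>a. k = 2^a)"
      using True by (metis power_Suc)
    show ?thesis using ih p True v2_fact_double[of k] by auto
  next
    case False
    then have m: "m = 2*k+1" using k by auto
    show ?thesis
    proof (cases "k = 0")
      case True then show ?thesis using m by (auto simp: v2_def intro: exI[of _ 0])
    next
      case False
      then have "k \<ge> 1" "k < m" using m by auto
      from less.IH[OF this(2) this(1)] have "v2 (fact k::nat) + 1 \<le> k" by auto
      then show ?thesis using m v2_fact_odd[of k] v2_fact_double[of k] by auto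
    qed
  qed
qed

lemma v2_fact_pow2: "v2 (fact (2^a)::nat) + 1 = 2^a"
proof (induction a)
  case 0 then show ?case by (simp add: v2_def)
next
  case (Suc a)
  have "(2::nat)^Suc a = 2 * 2^a" by simp
  then show ?case using Suc v2_fact_double[of "2^a"] by simp
qed


lemma pow_ge: "k \<ge> 4 \<Longrightarrow> (2::nat)^k \<ge> 2*k+4"
proof (induction k rule: dec_induct)
  case base then show ?case by simp
next
  case (step k) then show ?case by simp
qed

lemma f_bound:
  assumes "i \<ge> 2" "i \<noteq> 3"
  shows "int i - 1 - 2*int (v2 (i+1)) \<ge> 0 \<and> (i \<noteq> 7 \<longrightarrow> int i - 1 - 2*int (v2 (i+1)) \<ge> 1)
     \<and> (i \<noteq> 7 \<and> i \<noteq> 2 \<longrightarrow> int i - 1 - 2*int (v2 (i+1)) \<ge> 2)"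
proof -
  define k where "k = v2 (i+1)"
  have "2^k dvd (i+1)" unfolding k_def by (rule v2_dvd) simp
  then obtain m where m: "i+1 = 2^k * m" by blast
  have m1: "m \<ge> 1" using m by (cases m) auto
  have "i \<ge> 1 + 2*k \<and> (i \<noteq> 7 \<longrightarrow> i \<ge> 2 + 2*k) \<and> (i \<noteq> 7 \<and> i \<noteq> 2 \<longrightarrow> i \<ge> 3 + 2*k)"
  proof -
    consider "k = 0" | "k = 1" | "k = 2" | "k = 3" | "k \<ge> 4" by linarith
    then show ?thesis
    proof cases
      case 1 then show ?thesis using assms by auto
    next
      case 2 then have "i+1 = 2*m" using m by simp
      then have "m \<ge> 3" using assms by presburger
      then show ?thesis using \<open>i+1 = 2*m\<close> 2 by auto
    next
      case 3 then have "i+1 = 4*m" using m by simp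
      then have "m \<ge> 2" using assms by presburger
      then show ?thesis using \<open>i+1 = 4*m\<close> 3 by auto
    next
      case 4 then have "i+1 = 8*m" using m by simp
      then have "i = 7 \<or> m \<ge> 2" using m1 by presburger
      then show ?thesis using \<open>i+1 = 8*m\<close> 4 by auto
    next
      case 5
      have "2^k \<le> i+1" using m m1 by (metis mult_le_mono2 nat_mult_1_right)
      then show ?thesis using pow_ge[OF 5] by auto
    qed
  qed
  then show ?thesis unfolding k_def by auto
qed

definition cc :: "(nat \<Rightarrow> nat) \<Rightarrow> nat \<Rightarrow> int" where
  "cc u i = int (i * u i) + int (u i) - 2 * int (u i * v2 (i+1)) - 2 * int (v2 (fact (u i)))"

lemma cc_bound:
  assumes "i \<ge> 2" "i \<noteq> 3" "u i \<ge> 1"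
  shows "cc u i \<ge> 2 \<and> (\<not> ((i = 7 \<and> (\<exists>a. u i = 2^a)) \<or> (i = 2 \<and> u i = 1)) \<longrightarrow> cc u i \<ge> 4)"
proof -
  define m where "m = u i"
  define F where "F = int i - 1 - 2*int (v2 (i+1))"
  define v where "v = v2 (fact m::nat)"
  have c: "cc u i = int m * F + 2 * int m - 2 * int v"
    unfolding cc_def m_def F_def v_def by (simp add: algebra_simps)
  have F: "F \<ge> 0" "i \<noteq> 7 \<longrightarrow> F \<ge> 1" "i \<noteq> 7 \<and> i \<noteq> 2 \<longrightarrow> F \<ge> 2"
    using f_bound[OF assms(1,2)] unfolding F_def by auto
  have m1: "m \<ge> 1" using assms m_def by simp
  have vb: "v + 1 \<le> m" "(\<nexists>a. m = 2^a) \<longrightarrow> v + 2 \<le> m" using v2_fact_bound[OF m1] v_def by auto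
  have mF: "int m * F \<ge> 0" using F m1 by simp
  have g2: "cc u i \<ge> 2" using c mF vb by linarith
  moreover have "\<not> ((i = 7 \<and> (\<exists>a. u i = 2^a)) \<or> (i = 2 \<and> u i = 1)) \<longrightarrow> cc u i \<ge> 4"
  proof
    assume n: "\<not> ((i = 7 \<and> (\<exists>a. u i = 2^a)) \<or> (i = 2 \<and> u i = 1))"
    show "cc u i \<ge> 4"
    proof (cases "i = 7")
      case True
      then have "\<nexists>a. m = 2^a" using n m_def by auto
      then have "v + 2 \<le> m" using vb by blast
      then show ?thesis using c mF by linarith
    next
      case False
      show ?thesis
      proof (cases "m \<ge> 2")
        case True
        have "int m * F \<ge> int m * 1" using F False True by (intro mult_left_mono) auto
        then show ?thesis using c vb True by linarith
      next
        case f: False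
        then have "m = 1" using m1 by simp
        then have "i \<noteq> 2" using n m_def by auto
        then have "F \<ge> 2" using F False by auto
        then show ?thesis using c vb \<open>m = 1\<close> by simp
      qed
    qed
  qed
  ultimately show ?thesis by blast
qed


lemma split13:
  fixes h :: "nat \<Rightarrow> 'a::comm_monoid_add"
  assumes fin: "finite (psupp u)" and h1: "u 1 = 0 \<Longrightarrow> h 1 = 0" and h3: "u 3 = 0 \<Longrightarrow> h 3 = 0"
  shows "sum h (psupp u) = h 1 + h 3 + sum h (psupp u - {1,3})"
proof -
  have "sum h (psupp u) = sum h (psupp u \<inter> {1,3}) + sum h (psupp u - {1,3})"
    using fin by (rule sum.Int_Diff)
  moreover have "sum h (psupp u \<inter> {1,3}) = sum h {1,3}"
    by (rule sum.mono_neutral_left) (use h1 h3 in \<open>auto simp: psupp_def\<close>)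
  ultimately show ?thesis by simp
qed

lemma pGamma_formula:
  assumes "is_partition u"
  shows "pGamma u = sum (cc u) (psupp u - {1,3}) - 2"
    and "ndot u = (\<Sum>i\<in>psupp u - {1,3}. i * u i)"
proof -
  have fin: "finite (psupp u)" using assms unfolding is_partition_def psupp_def
    by (rule finite_subset[rotated]) auto
  define S where "S = psupp u - {1,3}"
  have w: "pweight u = u 1 + 3 * u 3 + (\<Sum>i\<in>S. i * u i)"
    unfolding pweight_def S_def by (subst split13[OF fin]) auto
  have d: "pdegree u = u 1 + u 3 + (\<Sum>i\<in>S. u i)"
    unfolding pdegree_def S_def by (subst split13[OF fin]) auto
  define g where "g i = u i * v2 (i+1) + v2 (fact (u i)::nat)" for i
  have "v2 (pgamma u) = (\<Sum>i\<in>psupp u. v2 ((i + 1) ^ (u i) * fact (u i)))"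
    unfolding pgamma_def v2_def
    by (rule prime_elem_multiplicity_prod_distrib) (use fin in \<open>auto simp: fact_nonzero\<close>)
  also have "\<dots> = (\<Sum>i\<in>psupp u. g i)"
    by (rule sum.cong) (auto simp: g_def v2_mult v2_pow fact_nonzero)
  also have "\<dots> = g 1 + g 3 + (\<Sum>i\<in>S. g i)"
    unfolding S_def by (subst split13[OF fin]) (auto simp: g_def v2_def)
  finally have vg: "v2 (pgamma u) = g 1 + g 3 + (\<Sum>i\<in>S. g i)" .
  have g1: "g 1 = v2 (fact (2 * u 1))" unfolding g_def using v2_2pow[of 1] v2_fact_double[of "u 1"] by (simp add: numeral_2_eq_2)
  have "v2 4 = 2" using v2_2pow[of 2] by simp
  then have g3: "g 3 = 2 * u 3 + v2 (fact (u 3))" unfolding g_def by simp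
  have pe: "pe u = int (\<Sum>i\<in>S. g i)" unfolding pe_def vg g1 g3 by simp
  show "ndot u = (\<Sum>i\<in>psupp u - {1,3}. i * u i)" unfolding ndot_def w S_def by simp
  have cs: "sum (cc u) S = int (\<Sum>i\<in>S. i * u i) + int (\<Sum>i\<in>S. u i) - 2 * int (\<Sum>i\<in>S. g i)"
    unfolding cc_def g_def by (simp add: sum_subtractf sum.distrib sum_distrib_left)
  show "pGamma u = sum (cc u) (psupp u - {1,3}) - 2"
    unfolding pGamma_def pe w d S_def[symmetric] cs by simp
qed


theorem lemma4p6:
  fixes u :: "nat \<Rightarrow> nat"
  assumes "is_partition u" and "pweight u \<ge> 1"
  shows "(ndot u = 0 \<longrightarrow> pGamma u = -2)
       \<and> ((\<exists>\<alpha>::nat. ndot u = 7 * 2 ^ \<alpha> \<and> u 7 = 2 ^ \<alpha>) \<longrightarrow> pGamma u = 0)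
       \<and> (ndot u = 2 \<longrightarrow> pGamma u = 1)
       \<and> (ndot u \<noteq> 0 \<and> \<not> (\<exists>\<alpha>::nat. ndot u = 7 * 2 ^ \<alpha> \<and> u 7 = 2 ^ \<alpha>)
            \<and> ndot u \<noteq> 2 \<longrightarrow> pGamma u \<ge> 2)"
proof -
  have fin0: "finite (psupp u)" using assms(1) unfolding is_partition_def psupp_def
    by (rule finite_subset[rotated]) auto
  define S where "S = psupp u - {1,3}"
  have fin: "finite S" using fin0 S_def by simp
  have G: "pGamma u = sum (cc u) S - 2" using pGamma_formula(1)[OF assms(1)] S_def by simp
  have N: "ndot u = (\<Sum>i\<in>S. i * u i)" using pGamma_formula(2)[OF assms(1)] S_def by simp
  have Smem: "i \<in> S \<longleftrightarrow> i \<ge> 2 \<and> i \<noteq> 3 \<and> u i \<ge> 1" for i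
    unfolding S_def psupp_def by auto
  have cb: "\<And>i. i \<in> S \<Longrightarrow> cc u i \<ge> 2 \<and> (\<not> ((i = 7 \<and> (\<exists>a. u i = 2^a)) \<or> (i = 2 \<and> u i = 1)) \<longrightarrow> cc u i \<ge> 4)"
    using cc_bound Smem by blast
  have S0: "ndot u = 0 \<longleftrightarrow> S = {}"
  proof -
    have "ndot u = 0 \<longleftrightarrow> (\<forall>i\<in>S. i * u i = 0)" unfolding N using fin by simp
    also have "\<dots> \<longleftrightarrow> S = {}" using Smem by auto
    finally show ?thesis .
  qed
  have le: "i * u i \<le> ndot u" if "i \<in> S" for i
    unfolding N using member_le_sum[OF that _ fin, of "\<lambda>i. i * u i"] by simp
  have single: "S = {i}" if "i \<in> S" "ndot u = i * u i" for i
  proof -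
    have "(\<Sum>j\<in>S. j * u j) = i * u i + (\<Sum>j\<in>S - {i}. j * u j)"
      using fin that(1) by (simp add: sum.remove)
    then have "(\<Sum>j\<in>S - {i}. j * u j) = 0" using N that(2) by simp
    then have "S - {i} = {}" using fin Smem by auto
    then show ?thesis using that(1) by auto
  qed
  have p1: "ndot u = 0 \<longrightarrow> pGamma u = -2" using S0 G by simp
  have p2: "(\<exists>\<alpha>::nat. ndot u = 7 * 2 ^ \<alpha> \<and> u 7 = 2 ^ \<alpha>) \<longrightarrow> pGamma u = 0"
  proof
    assume "\<exists>\<alpha>::nat. ndot u = 7 * 2 ^ \<alpha> \<and> u 7 = 2 ^ \<alpha>"
    then obtain a where a: "ndot u = 7 * 2 ^ a" "u 7 = 2 ^ a" by blast
    have "7 \<in> S" using a Smem by simp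
    then have "S = {7}" using single a by simp
    have "v2 8 = 3" using v2_2pow[of 3] by simp
    moreover have "int (v2 (fact (2^a)::nat)) = 2^a - 1" using v2_fact_pow2[of a]
      by (metis add_diff_cancel_right' of_nat_1 of_nat_add of_nat_numeral of_nat_power)
    ultimately have "cc u 7 = 2" unfolding cc_def a(2)
      by (simp add: algebra_simps)
    then show "pGamma u = 0" using G \<open>S = {7}\<close> by simp
  qed
  have p3: "ndot u = 2 \<longrightarrow> pGamma u = 1"
  proof
    assume n2: "ndot u = 2"
    have sub: "S \<subseteq> {2}"
    proof
      fix i assume i: "i \<in> S"
      then have "i * u i \<le> 2" using le n2 by fastforce
      moreover have "i \<ge> 2" "u i \<ge> 1" using i Smem by auto
      ultimately have "i * 1 \<le> 2" by (meson dual_order.trans mult_le_mono2)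
      then show "i \<in> {2}" using \<open>i \<ge> 2\<close> by simp
    qed
    moreover have "S \<noteq> {}" using S0 n2 by simp
    ultimately have "S = {2}" by blast
    then have "u 2 = 1" using N n2 by simp
    have "v2 3 = 0" by (rule v2_odd) simp
    then have "cc u 2 = 3" unfolding cc_def \<open>u 2 = 1\<close> by (simp add: v2_def)
    then show "pGamma u = 1" using G \<open>S = {2}\<close> by simp
  qed
  have p4: "ndot u \<noteq> 0 \<and> \<not> (\<exists>\<alpha>::nat. ndot u = 7 * 2 ^ \<alpha> \<and> u 7 = 2 ^ \<alpha>)
            \<and> ndot u \<noteq> 2 \<longrightarrow> pGamma u \<ge> 2"
  proof
    assume h: "ndot u \<noteq> 0 \<and> \<not> (\<exists>\<alpha>::nat. ndot u = 7 * 2 ^ \<alpha> \<and> u 7 = 2 ^ \<alpha>) \<and> ndot u \<noteq> 2"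
    then have "S \<noteq> {}" using S0 by simp
    then obtain i where i: "i \<in> S" by blast
    have nn: "\<forall>j\<in>S. 0 \<le> cc u j" using cb by fastforce
    have "sum (cc u) S \<ge> 4"
    proof (cases "S = {i}")
      case True
      then have "ndot u = i * u i" using N by simp
      then have "\<not> ((i = 7 \<and> (\<exists>a. u i = 2^a)) \<or> (i = 2 \<and> u i = 1))" using h by auto
      then show ?thesis using cb[OF i] True by simp
    next
      case False
      then obtain j where j: "j \<in> S" "j \<noteq> i" using i by blast
      have "sum (cc u) {i,j} \<le> sum (cc u) S"
        by (rule sum_mono2) (use fin i j nn in auto)
      moreover have "sum (cc u) {i,j} = cc u i + cc u j" using j by simp
      ultimately show ?thesis using cb[OF i] cb[OF j(1)] by linarith
    qed
    then show "pGamma u \<ge> 2" using G by simp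
  qed
  show ?thesis using p1 p2 p3 p4 by blast
qed

end
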